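(* Let $m,n\in\mathbb{N}$, $T=\{1,\dots,m\}$, $\bar A\in\mathbb{R}^{m\times n}$, $\bar b\in\mathbb{R}^m$ with $P:=\{x\in\mathbb{R}^n\mid\bar Ax\le\bar b\}\neq\emptyset$, and let $F$ be a face of $P$. Then there exists $\gamma_F\ge0$ such that $\operatorname{clm}\mathcal{F}_{\bar A}(\bar b,x)=\gamma_F$ for all $x\in\operatorname{ri}F$, and moreover $\operatorname{clm}\mathcal{F}_{\bar A}(\bar b,x)\ge\gamma_F$ for all $x\in F\setminus\operatorname{ri}F$.
   Context: $\mathcal{F}_{\bar A}:\mathbb{R}^m\rightrightarrows\mathbb{R}^n$ is defined by $\mathcal{F}_{\bar A}(b)=\{x\in\mathbb{R}^n\mid\bar Ax\le b\}$ (right-hand side perturbations). $\mathbb{R}^n$ carries an arbitrary norm $\|\cdot\|$, $\mathbb{R}^m$ carries $\|b\|_\infty=\max_t|b_t|$, and $\operatorname{dist}(x,\Omega)=\inf_{\omega\in\Omega}\|x-\omega\|$. For $x\in\mathcal{F}_{\bar A}(\bar b)$, the calmness modulus $\operatorname{clm}\mathcal{F}_{\bar A}(\bar b,x)$ is the infimum of all $\kappa\ge0$ for which there are neighborhoods $V$ of $\bar b$ and $U$ of $x$ with $\operatorname{dist}(z,\mathcal{F}_{\bar A}(\bar b))\le\kappa\|b-\bar b\|_\infty$ for all $b\in V$ and all $z\in\mathcal{F}_{\bar A}(b)\cap U$. $\operatorname{ri}$ denotes relative interior. *)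

theory Defs
  imports "HOL-Analysis.Analysis"
begin

definition is_norm :: "('a::real_vector \<Rightarrow> real) \<Rightarrow> bool" where
  "is_norm N \<longleftrightarrow> (\<forall>x. 0 \<le> N x) \<and> (\<forall>x. N x = 0 \<longleftrightarrow> x = 0)
     \<and> (\<forall>c x. N (c *\<^sub>R x) = \<bar>c\<bar> * N x) \<and> (\<forall>x y. N (x + y) \<le> N x + N y)"

definition supnorm :: "real ^ 'm \<Rightarrow> real" where
  "supnorm b = Max (range (\<lambda>t. \<bar>b $ t\<bar>))"

definition distN :: "('a::real_vector \<Rightarrow> real) \<Rightarrow> 'a \<Rightarrow> 'a set \<Rightarrow> real" where
  "distN N x \<Omega> = Inf {N (x - \<omega>) | \<omega>. \<omega> \<in> \<Omega>}"

definition feas :: "real ^ 'n ^ 'm \<Rightarrow> real ^ 'm \<Rightarrow> (real ^ 'n) set" where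
  "feas A b = {x. \<forall>t. (A *v x) $ t \<le> b $ t}"

text \<open>Calmness modulus (as an extended real; +\<infinity> if no such \<kappa> exists).\<close>
definition clm :: "(real ^ 'n \<Rightarrow> real) \<Rightarrow> real ^ 'n ^ 'm \<Rightarrow> real ^ 'm \<Rightarrow> real ^ 'n \<Rightarrow> ereal" where
  "clm N A b0 x = Inf (ereal ` {\<kappa>. 0 \<le> \<kappa> \<and>
     (\<exists>V U. open V \<and> b0 \<in> V \<and> open U \<and> x \<in> U \<and>
        (\<forall>b\<in>V. \<forall>z\<in>feas A b \<inter> U. distN N z (feas A b0) \<le> \<kappa> * supnorm (b - b0)))})"

end

theory Submission
  imports Defs
begin

lemma hoffman_cone:
  fixes a :: "'i \<Rightarrow> 'a::euclidean_space"
  assumes "finite I"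
  shows "\<exists>H\<ge>0. \<forall>u e. 0 \<le> e \<longrightarrow> (\<forall>t\<in>I. a t \<bullet> u \<le> e) \<longrightarrow>
            (\<exists>w. (\<forall>t\<in>I. a t \<bullet> w \<le> 0) \<and> norm (u - w) \<le> H * e)"
  using assms
proof (induction I rule: finite_psubset_induct)
  case (psubset I)
  define S where "S = span (a ` I)"
  define C where "C = {w. \<forall>t\<in>I. a t \<bullet> w \<le> 0}"
  have sph: "\<exists>H\<ge>0. \<forall>u e. u \<in> S \<longrightarrow> norm u = 1 \<longrightarrow> 0 \<le> e \<longrightarrow> (\<forall>t\<in>I. a t \<bullet> u \<le> e)
                \<longrightarrow> (\<exists>w\<in>C. norm (u - w) \<le> H * e)"
  proof (rule ccontr)
    assume "\<not> ?thesis"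
    then have "\<forall>k::nat. \<exists>u e. u \<in> S \<and> norm u = 1 \<and> 0 \<le> e \<and> (\<forall>t\<in>I. a t \<bullet> u \<le> e)
                 \<and> (\<forall>w\<in>C. real k * e < norm (u - w))"
      by (metis of_nat_0_le_iff not_le)
    then obtain u e where ue: "\<And>k. u k \<in> S" "\<And>k. norm (u k) = 1" "\<And>k. 0 \<le> e k"
      "\<And>k t. t\<in>I \<Longrightarrow> a t \<bullet> u k \<le> e k" "\<And>k w. w \<in> C \<Longrightarrow> real k * e k < norm (u k - w)"
      by metis
    have "0 \<in> C" by (simp add: C_def)
    then have eb: "real k * e k < 1" for k using ue(5)[of 0 k] ue(2)[of k] by simp
    have "compact (sphere (0::'a) 1 \<inter> S)"
      by (simp add: S_def compact_Int_closed)
    moreover have "\<forall>k. u k \<in> sphere 0 1 \<inter> S" using ue(1,2) by simp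
    ultimately obtain l r where lK: "l \<in> sphere 0 1 \<inter> S" and r: "strict_mono (r::nat\<Rightarrow>nat)"
      and ul: "(u \<circ> r) \<longlonglongrightarrow> l"
      using seq_compactE[OF compact_imp_seq_compact] by metis
    have ur: "(\<lambda>n. u (r n)) \<longlonglongrightarrow> l" using ul by (simp add: o_def)
    have er: "(\<lambda>n. e (r n)) \<longlonglongrightarrow> 0"
    proof (rule tendsto_sandwich[of "\<lambda>_. 0" _ _ "\<lambda>n. 1 / real n"])
      show "\<forall>\<^sub>F n in sequentially. 0 \<le> e (r n)" using ue(3) by simp
      show "\<forall>\<^sub>F n in sequentially. e (r n) \<le> 1 / real n"
        unfolding eventually_sequentially
      proof (intro exI[of _ 1] allI impI)
        fix n :: nat assume n: "1 \<le> n"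
        have "real n \<le> real (r n)" using seq_suble[OF r] by simp
        then have "real n * e (r n) \<le> real (r n) * e (r n)"
          using ue(3) by (simp add: mult_right_mono)
        also have "\<dots> < 1" using eb by simp
        finally show "e (r n) \<le> 1 / real n" using n by (simp add: field_simps)
      qed
    qed (auto simp: lim_inverse_n')
    have lC: "a t \<bullet> l \<le> 0" if "t \<in> I" for t
    proof (rule LIMSEQ_le[OF tendsto_inner[OF tendsto_const ur] er])
      show "\<exists>N. \<forall>n\<ge>N. a t \<bullet> u (r n) \<le> e (r n)" using ue(4) that by blast
    qed
    define J where "J = {t\<in>I. a t \<bullet> l = 0}"
    have "J \<noteq> I"
    proof
      assume JI: "J = I"
      have "orthogonal l l"
      proof (rule orthogonal_to_span)
        show "l \<in> span (a ` I)" using lK S_def by simp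
        show "orthogonal l y" if "y \<in> a ` I" for y
          using that JI unfolding J_def orthogonal_def by (auto simp: inner_commute)
      qed
      then show False using lK by (simp add: orthogonal_self)
    qed
    then have "J \<subset> I" unfolding J_def by blast
    then obtain HJ where HJ: "HJ \<ge> 0" and HJ2: "\<And>u e. 0 \<le> e \<Longrightarrow> (\<forall>t\<in>J. a t \<bullet> u \<le> e) \<Longrightarrow>
        (\<exists>w. (\<forall>t\<in>J. a t \<bullet> w \<le> 0) \<and> norm (u - w) \<le> HJ * e)"
      using psubset.IH by metis
    have ev1: "\<forall>t\<in>I - J. eventually (\<lambda>n. a t \<bullet> u (r n) + norm (a t) * (HJ * e (r n)) < 0) sequentially"
    proof
      fix t assume t: "t \<in> I - J"
      then have "a t \<bullet> l < 0" using lC unfolding J_def by force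
      moreover have "(\<lambda>n. a t \<bullet> u (r n) + norm (a t) * (HJ * e (r n))) \<longlonglongrightarrow> a t \<bullet> l + norm (a t) * (HJ * 0)"
        by (intro tendsto_intros ur er)
      ultimately show "eventually (\<lambda>n. a t \<bullet> u (r n) + norm (a t) * (HJ * e (r n)) < 0) sequentially"
        using order_tendstoD(2) by fastforce
    qed
    have ev2: "eventually (\<lambda>n. HJ \<le> real (r n)) sequentially"
      unfolding eventually_sequentially
    proof (intro exI[of _ "nat \<lceil>HJ\<rceil>"] allI impI)
      fix n assume "nat \<lceil>HJ\<rceil> \<le> n"
      then have "nat \<lceil>HJ\<rceil> \<le> r n" using seq_suble[OF r] le_trans by blast
      then show "HJ \<le> real (r n)" by linarith
    qed
    have "eventually (\<lambda>n. (\<forall>t\<in>I - J. a t \<bullet> u (r n) + norm (a t) * (HJ * e (r n)) < 0) \<and> HJ \<le> real (r n)) sequentially"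
      using eventually_conj[OF eventually_ball_finite[OF _ ev1] ev2] psubset.hyps by blast
    then obtain n where n1: "\<forall>t\<in>I - J. a t \<bullet> u (r n) + norm (a t) * (HJ * e (r n)) < 0"
      and n2: "HJ \<le> real (r n)"
      unfolding eventually_sequentially by blast
    define k where "k = r n"
    obtain w where w1: "\<forall>t\<in>J. a t \<bullet> w \<le> 0" and w2: "norm (u k - w) \<le> HJ * e k"
      using HJ2[of "e k" "u k"] ue(3,4) unfolding J_def by blast
    have "w \<in> C"
      unfolding C_def
    proof safe
      fix t assume t: "t \<in> I"
      show "a t \<bullet> w \<le> 0"
      proof (cases "t \<in> J")
        case True then show ?thesis using w1 by blast
      next
        case False
        have "a t \<bullet> w = a t \<bullet> u k + a t \<bullet> (w - u k)" by (simp add: inner_diff_right)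
        also have "\<dots> \<le> a t \<bullet> u k + norm (a t) * norm (w - u k)"
          using norm_cauchy_schwarz by simp
        also have "\<dots> \<le> a t \<bullet> u k + norm (a t) * (HJ * e k)"
          using w2 by (simp add: mult_left_mono norm_minus_commute)
        also have "\<dots> < 0" using n1 t False k_def by blast
        finally show ?thesis by simp
      qed
    qed
    then have "real k * e k < norm (u k - w)" using ue(5) by blast
    also have "\<dots> \<le> HJ * e k" by (rule w2)
    also have "\<dots> \<le> real k * e k" using n2 k_def ue(3) by (simp add: mult_right_mono)
    finally show False by simp
  qed
  then obtain H where H0: "H \<ge> 0" and H: "\<And>u e. u \<in> S \<Longrightarrow> norm u = 1 \<Longrightarrow> 0 \<le> e \<Longrightarrow> (\<forall>t\<in>I. a t \<bullet> u \<le> e)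
                \<Longrightarrow> (\<exists>w\<in>C. norm (u - w) \<le> H * e)" by metis
  show ?case
  proof (intro exI[of _ H] conjI allI impI H0)
    fix u e assume e: "0 \<le> e" and ue: "\<forall>t\<in>I. a t \<bullet> u \<le> e"
    obtain s z where s: "s \<in> S" and z: "\<And>w. w \<in> S \<Longrightarrow> orthogonal z w" and usz: "u = s + z"
      using orthogonal_subspace_decomp_exists[of "a ` I" u] S_def by metis
    have az: "a t \<bullet> z = 0" if "t \<in> I" for t
      using z[of "a t"] that unfolding S_def orthogonal_def by (auto simp: span_base inner_commute)
    have as: "a t \<bullet> s = a t \<bullet> u" if "t \<in> I" for t using az[OF that] usz by (simp add: inner_add_right)
    show "\<exists>w. (\<forall>t\<in>I. a t \<bullet> w \<le> 0) \<and> norm (u - w) \<le> H * e"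
    proof (cases "s = 0")
      case True
      then show ?thesis using az usz e H0 by (intro exI[of _ u]) auto
    next
      case False
      define ns where "ns = norm s"
      have ns: "ns > 0" using False ns_def by simp
      have s1: "(1/ns) *\<^sub>R s \<in> S" using s S_def by (simp add: span_scale)
      have s2: "norm ((1/ns) *\<^sub>R s) = 1" using ns ns_def by simp
      have s3: "\<forall>t\<in>I. a t \<bullet> ((1/ns) *\<^sub>R s) \<le> e / ns"
        using as ue ns by (simp add: divide_right_mono)
      obtain w' where w'C: "w' \<in> C" and w': "norm ((1/ns) *\<^sub>R s - w') \<le> H * (e / ns)"
        using H[OF s1 s2 _ s3] e ns by auto
      show ?thesis
      proof (intro exI[of _ "ns *\<^sub>R w' + z"] conjI ballI)
        fix t assume t: "t \<in> I"
        show "a t \<bullet> (ns *\<^sub>R w' + z) \<le> 0"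
          using w'C t az[OF t] ns by (simp add: C_def inner_add_right mult_nonneg_nonpos)
      next
        have "u - (ns *\<^sub>R w' + z) = ns *\<^sub>R ((1/ns) *\<^sub>R s - w')"
          using usz ns by (simp add: algebra_simps)
        then have "norm (u - (ns *\<^sub>R w' + z)) = ns * norm ((1/ns) *\<^sub>R s - w')"
          using ns by simp
        also have "\<dots> \<le> ns * (H * (e / ns))" using mult_left_mono[OF w' less_imp_le[OF ns]] .
        also have "\<dots> = H * e" using ns by simp
        finally show "norm (u - (ns *\<^sub>R w' + z)) \<le> H * e" .
      qed
    qed
  qed
qed


lemma normN_basic:
  assumes "is_norm N"
  shows "N 0 = 0" "N (- x) = N x" "N (x + y) \<le> N x + N y" "N (c *\<^sub>R x) = \<bar>c\<bar> * N x" "0 \<le> N x"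
    "N (x - y) = N (y - x)"
proof -
  show "N 0 = 0" using assms unfolding is_norm_def by blast
  show "N (- x) = N x" using assms unfolding is_norm_def by (metis abs_minus_cancel abs_one mult_1 scaleR_minus1_left)
  show "N (x + y) \<le> N x + N y" "N (c *\<^sub>R x) = \<bar>c\<bar> * N x" "0 \<le> N x"
    using assms unfolding is_norm_def by blast+
  show "N (x - y) = N (y - x)" using assms unfolding is_norm_def
    by (metis abs_minus_cancel abs_one mult_1 scaleR_minus1_left minus_diff_eq)
qed

lemma normN_sum:
  assumes "is_norm N" "finite S"
  shows "N (sum f S) \<le> (\<Sum>i\<in>S. N (f i))"
  using assms(2)
proof (induction S rule: finite_induct)
  case empty then show ?case using normN_basic[OF assms(1)] by simp
next
  case (insert x F)
  then show ?case using normN_basic(3)[OF assms(1), of "f x" "sum f F"] by simp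
qed

lemma normN_upper:
  fixes N :: "'a::euclidean_space \<Rightarrow> real"
  assumes N: "is_norm N"
  shows "\<exists>c>0. \<forall>x. N x \<le> c * norm x"
proof (intro exI[of _ "(\<Sum>b\<in>Basis. N b) + 1"] conjI allI)
  have s0: "0 \<le> (\<Sum>b\<in>Basis. N b)" using normN_basic(5)[OF N] by (simp add: sum_nonneg)
  then show "0 < (\<Sum>b\<in>Basis. N b) + 1" by simp
  fix x :: 'a
  have "N x = N (\<Sum>b\<in>Basis. (x \<bullet> b) *\<^sub>R b)" by (simp add: euclidean_representation)
  also have "\<dots> \<le> (\<Sum>b\<in>Basis. N ((x \<bullet> b) *\<^sub>R b))" by (rule normN_sum[OF N]) simp
  also have "\<dots> = (\<Sum>b\<in>Basis. \<bar>x \<bullet> b\<bar> * N b)" using normN_basic(4)[OF N] by simp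
  also have "\<dots> \<le> (\<Sum>b\<in>Basis. norm x * N b)"
    by (intro sum_mono mult_right_mono Basis_le_norm normN_basic(5)[OF N])
  also have "\<dots> = norm x * (\<Sum>b\<in>Basis. N b)" by (simp add: sum_distrib_left)
  also have "\<dots> \<le> ((\<Sum>b\<in>Basis. N b) + 1) * norm x" by (simp add: algebra_simps)
  finally show "N x \<le> ((\<Sum>b\<in>Basis. N b) + 1) * norm x" .
qed

lemma normN_cont:
  fixes N :: "'a::euclidean_space \<Rightarrow> real"
  assumes N: "is_norm N"
  shows "continuous_on S N"
proof -
  obtain c where c: "c > 0" "\<And>x. N x \<le> c * norm x" using normN_upper[OF N] by blast
  have lip: "\<bar>N x - N y\<bar> \<le> c * norm (x - y)" for x y
  proof -
    have "N x \<le> N y + N (x - y)" using normN_basic(3)[OF N, of y "x - y"] by simp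
    moreover have "N y \<le> N x + N (x - y)"
      using normN_basic(3)[OF N, of x "y - x"] normN_basic(6)[OF N, of x y] by simp
    ultimately show ?thesis using c(2)[of "x - y"] by linarith
  qed
  show ?thesis unfolding continuous_on_iff
  proof (intro ballI allI impI)
    fix x e assume "x \<in> S" "(0::real) < e"
    show "\<exists>d>0. \<forall>x'\<in>S. dist x' x < d \<longrightarrow> dist (N x') (N x) < e"
    proof (intro exI[of _ "e / c"] conjI ballI impI)
      show "0 < e / c" using \<open>0 < e\<close> c by simp
      fix x' assume "x' \<in> S" "dist x' x < e / c"
      then have "c * norm (x' - x) < e" using c by (simp add: dist_norm field_simps)
      then show "dist (N x') (N x) < e" using lip[of x' x] by (simp add: dist_real_def)
    qed
  qed
qed

lemma normN_lower:
  fixes N :: "'a::euclidean_space \<Rightarrow> real"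
  assumes N: "is_norm N"
  shows "\<exists>m>0. \<forall>x. m * norm x \<le> N x"
proof -
  obtain b :: 'a where b: "b \<in> Basis" using nonempty_Basis by blast
  have ne: "sphere (0::'a) 1 \<noteq> {}" using b by (auto intro!: exI[of _ b])
  obtain x0 where x0: "x0 \<in> sphere (0::'a) 1" and mn: "\<forall>y\<in>sphere 0 1. N x0 \<le> N y"
    using continuous_attains_inf[OF compact_sphere ne normN_cont[OF N]] by blast
  have "x0 \<noteq> 0" using x0 by auto
  then have pos: "N x0 > 0" using N unfolding is_norm_def by (metis order_le_less)
  show ?thesis
  proof (intro exI[of _ "N x0"] conjI allI pos)
    fix x :: 'a
    show "N x0 * norm x \<le> N x"
    proof (cases "x = 0")
      case True then show ?thesis using normN_basic[OF N] by simp
    next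
      case False
      have "(1 / norm x) *\<^sub>R x \<in> sphere 0 1" using False by simp
      then have "N x0 \<le> N ((1 / norm x) *\<^sub>R x)" using mn by blast
      also have "\<dots> = N x / norm x" using normN_basic(4)[OF N] by simp
      finally show ?thesis using False by (simp add: field_simps)
    qed
  qed
qed

lemma feas_iff: "x \<in> feas A b \<longleftrightarrow> (\<forall>t. A $ t \<bullet> x \<le> b $ t)"
  by (simp add: feas_def matrix_vector_mul_component)

lemma distN_le:
  assumes N: "is_norm N" and w: "w \<in> S"
  shows "distN N z S \<le> N (z - w)"
  unfolding distN_def
proof (rule cInf_lower)
  show "N (z - w) \<in> {N (z - \<omega>) |\<omega>. \<omega> \<in> S}" using w by blast
  show "bdd_below {N (z - \<omega>) |\<omega>. \<omega> \<in> S}"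
    using normN_basic(5)[OF N] by (auto intro!: bdd_belowI[of _ 0])
qed

lemma distN_lessD:
  assumes "S \<noteq> {}" "distN N z S < r"
  shows "\<exists>w\<in>S. N (z - w) < r"
  using cInf_lessD[of "{N (z - \<omega>) |\<omega>. \<omega> \<in> S}" r] assms unfolding distN_def by blast

lemma supnorm_ge: "\<bar>v $ t\<bar> \<le> supnorm v"
  unfolding supnorm_def by (rule Max_ge) auto

lemma supnorm_scale_le:
  assumes "0 \<le> \<mu>"
  shows "supnorm (\<mu> *\<^sub>R v) \<le> \<mu> * supnorm v"
  unfolding supnorm_def[of "\<mu> *\<^sub>R v"]
proof (rule Max.boundedI)
  fix r assume "r \<in> range (\<lambda>t. \<bar>(\<mu> *\<^sub>R v) $ t\<bar>)"
  then obtain t where "r = \<bar>\<mu>\<bar> * \<bar>v $ t\<bar>" by (auto simp: abs_mult)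
  then show "r \<le> \<mu> * supnorm v"
    using supnorm_ge[of v t] assms by (simp add: mult_left_mono)
qed auto

lemma local_dist:
  fixes N :: "real^'n \<Rightarrow> real" and A :: "real^'n^'m"
  assumes N: "is_norm N" and x: "x \<in> feas A b"
  shows "\<exists>\<rho>>0. \<forall>z c. norm (z - x) < \<rho> \<longrightarrow> (\<forall>t. A$t \<bullet> x = b$t \<longrightarrow> A$t \<bullet> c \<le> 0)
           \<longrightarrow> distN N z (feas A b) \<le> N (z - x - c)"
proof -
  obtain cN where cN: "cN > 0" "\<And>x. N x \<le> cN * norm x" using normN_upper[OF N] by blast
  obtain m where m: "m > 0" "\<And>x. m * norm x \<le> N x" using normN_lower[OF N] by blast
  define D where "D = insert 1 ((\<lambda>t. b$t - A$t \<bullet> x) ` {t. A$t \<bullet> x \<noteq> b$t})"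
  define \<delta> where "\<delta> = Min D"
  have xf: "A$t \<bullet> x \<le> b$t" for t using x by (simp add: feas_iff)
  have finD: "finite D" unfolding D_def by simp
  have "\<delta> > 0" unfolding \<delta>_def using finD
    by (subst Min_gr_iff) (auto simp: D_def, metis xf order_le_less diff_gt_0_iff_gt)
  have \<delta>le: "A$t \<bullet> x + \<delta> \<le> b$t" if "A$t \<bullet> x \<noteq> b$t" for t
  proof -
    have "\<delta> \<le> b$t - A$t \<bullet> x" unfolding \<delta>_def using finD that by (intro Min_le) (auto simp: D_def)
    then show ?thesis by simp
  qed
  define M where "M = (\<Sum>t\<in>UNIV. norm (A$t)) + 1"
  have M: "norm (A$t) \<le> M" for t
  proof -
    have "norm (A$t) \<le> (\<Sum>t\<in>UNIV. norm (A$t))" by (rule member_le_sum) auto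
    then show ?thesis unfolding M_def by simp
  qed
  have M0: "M > 0" unfolding M_def by (simp add: sum_nonneg add_nonneg_pos)
  define \<rho> where "\<rho> = \<delta> * m / (2 * cN * M)"
  have \<rho>0: "\<rho> > 0" unfolding \<rho>_def using \<open>\<delta> > 0\<close> m cN M0 by simp
  show ?thesis
  proof (intro exI[of _ \<rho>] conjI allI impI \<rho>0)
    fix z c assume z: "norm (z - x) < \<rho>" and c: "\<forall>t. A$t \<bullet> x = b$t \<longrightarrow> A$t \<bullet> c \<le> 0"
    show "distN N z (feas A b) \<le> N (z - x - c)"
    proof (cases "N c \<le> 2 * N (z - x)")
      case True
      have "m * norm c \<le> 2 * (cN * norm (z - x))" using m(2)[of c] cN(2)[of "z - x"] True by linarith
      also have "\<dots> < 2 * (cN * \<rho>)" using z cN by simp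
      also have "\<dots> = \<delta> * m / M" unfolding \<rho>_def using cN M0 by (simp add: field_simps)
      finally have "M * norm c < \<delta>" using m M0 by (simp add: field_simps)
      have "x + c \<in> feas A b" unfolding feas_iff
      proof
        fix t
        show "A$t \<bullet> (x + c) \<le> b$t"
        proof (cases "A$t \<bullet> x = b$t")
          case True then show ?thesis using c by (simp add: inner_add_right)
        next
          case False
          have "A$t \<bullet> c \<le> norm (A$t) * norm c" by (rule norm_cauchy_schwarz)
          also have "\<dots> \<le> M * norm c" using M[of t] by (simp add: mult_right_mono)
          finally show ?thesis using \<delta>le[OF False] \<open>M * norm c < \<delta>\<close> by (simp add: inner_add_right)
        qed
      qed
      then have "distN N z (feas A b) \<le> N (z - (x + c))" by (rule distN_le[OF N])
      then show ?thesis by (simp add: diff_diff_eq)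
    next
      case False
      have "distN N z (feas A b) \<le> N (z - x)" using distN_le[OF N x] .
      moreover have "N c \<le> N (z - x) + N (z - x - c)"
        using normN_basic(3)[OF N, of "z - x" "- (z - x - c)"] normN_basic(2)[OF N, of "z - x - c"] by simp
      ultimately show ?thesis using False by linarith
    qed
  qed
qed


definition calmset :: "(real ^ 'n \<Rightarrow> real) \<Rightarrow> real ^ 'n ^ 'm \<Rightarrow> real ^ 'm \<Rightarrow> real ^ 'n \<Rightarrow> real set" where
  "calmset N A b0 x = {\<kappa>. 0 \<le> \<kappa> \<and>
     (\<exists>V U. open V \<and> b0 \<in> V \<and> open U \<and> x \<in> U \<and>
        (\<forall>b\<in>V. \<forall>z\<in>feas A b \<inter> U. distN N z (feas A b0) \<le> \<kappa> * supnorm (b - b0)))}"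

lemma clm_eq: "clm N A b x = Inf (ereal ` calmset N A b x)"
  by (simp add: clm_def calmset_def)

lemma calm_nonempty:
  fixes N :: "real^'n \<Rightarrow> real" and A :: "real^'n^'m"
  assumes N: "is_norm N" and x: "x \<in> feas A b"
  shows "\<exists>\<kappa>. \<kappa> \<in> calmset N A b x"
proof -
  define I where "I = {t. A$t \<bullet> x = b$t}"
  obtain H where H0: "H \<ge> 0" and H: "\<And>u e. 0 \<le> e \<Longrightarrow> (\<forall>t\<in>I. A$t \<bullet> u \<le> e) \<Longrightarrow>
            (\<exists>w. (\<forall>t\<in>I. A$t \<bullet> w \<le> 0) \<and> norm (u - w) \<le> H * e)"
    using hoffman_cone[of I "\<lambda>t. A$t"] by auto
  obtain \<rho> where \<rho>: "\<rho> > 0" and loc: "\<And>z c. norm (z - x) < \<rho> \<Longrightarrow> (\<forall>t. A$t \<bullet> x = b$t \<longrightarrow> A$t \<bullet> c \<le> 0)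
           \<Longrightarrow> distN N z (feas A b) \<le> N (z - x - c)"
    using local_dist[OF N x] by blast
  obtain cN where cN: "cN > 0" "\<And>x. N x \<le> cN * norm x" using normN_upper[OF N] by blast
  have key: "\<forall>b'\<in>UNIV. \<forall>z\<in>feas A b' \<inter> ball x \<rho>. distN N z (feas A b) \<le> cN * H * supnorm (b' - b)"
  proof (intro ballI)
    fix b' z assume z: "z \<in> feas A b' \<inter> ball x \<rho>"
    define e where "e = supnorm (b' - b)"
    have e0: "0 \<le> e" unfolding e_def using supnorm_ge[of "b' - b"] by (meson abs_ge_zero order_trans)
    have "\<forall>t\<in>I. A$t \<bullet> (z - x) \<le> e"
    proof
      fix t assume "t \<in> I"
      then have "A$t \<bullet> (z - x) = A$t \<bullet> z - b$t" by (simp add: I_def inner_diff_right)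
      also have "\<dots> \<le> b'$t - b$t" using z by (simp add: feas_iff)
      also have "\<dots> \<le> e" using supnorm_ge[of "b' - b" t] unfolding e_def by simp
      finally show "A$t \<bullet> (z - x) \<le> e" .
    qed
    then obtain w where w1: "\<forall>t\<in>I. A$t \<bullet> w \<le> 0" and w2: "norm (z - x - w) \<le> H * e"
      using H[OF e0] by blast
    have "norm (z - x) < \<rho>" using z by (simp add: dist_norm norm_minus_commute)
    then have "distN N z (feas A b) \<le> N (z - x - w)" using loc w1 unfolding I_def by blast
    also have "\<dots> \<le> cN * norm (z - x - w)" by (rule cN(2))
    also have "\<dots> \<le> cN * (H * e)" using w2 cN by simp
    finally show "distN N z (feas A b) \<le> cN * H * supnorm (b' - b)" by (simp add: e_def mult.assoc)
  qed
  have "cN * H \<ge> 0" using cN H0 by simp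
  moreover have "\<exists>V U. open V \<and> b \<in> V \<and> open U \<and> x \<in> U \<and>
        (\<forall>b'\<in>V. \<forall>z\<in>feas A b' \<inter> U. distN N z (feas A b) \<le> cN * H * supnorm (b' - b))"
    by (rule exI[of _ UNIV], rule exI[of _ "ball x \<rho>"]) (intro conjI open_UNIV UNIV_I open_ball centre_in_ball[THEN iffD2] \<rho> key)
  ultimately have "cN * H \<in> calmset N A b x" unfolding calmset_def by (intro CollectI conjI)
  then show ?thesis by blast
qed

lemma calm_mono:
  fixes N :: "real^'n \<Rightarrow> real" and A :: "real^'n^'m"
  assumes N: "is_norm N" and x: "x \<in> feas A b" and y: "y \<in> feas A b"
    and act: "\<And>t. A$t \<bullet> x = b$t \<Longrightarrow> A$t \<bullet> y = b$t"
    and k: "\<kappa> \<in> calmset N A b y"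
  shows "\<kappa> \<in> calmset N A b x"
proof -
  obtain V U where k0: "0 \<le> \<kappa>" and V: "open V" "b \<in> V" and U: "open U" "y \<in> U"
    and cal: "\<And>b' z. b' \<in> V \<Longrightarrow> z \<in> feas A b' \<inter> U \<Longrightarrow> distN N z (feas A b) \<le> \<kappa> * supnorm (b' - b)"
    using k unfolding calmset_def by blast
  obtain \<rho> where \<rho>: "\<rho> > 0" and loc: "\<And>z c. norm (z - x) < \<rho> \<Longrightarrow> (\<forall>t. A$t \<bullet> x = b$t \<longrightarrow> A$t \<bullet> c \<le> 0)
           \<Longrightarrow> distN N z (feas A b) \<le> N (z - x - c)"
    using local_dist[OF N x] by blast
  have xf: "A$t \<bullet> x \<le> b$t" for t using x by (simp add: feas_iff)
  have yf: "A$t \<bullet> y \<le> b$t" for t using y by (simp add: feas_iff)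
  have key: "\<forall>b'\<in>UNIV. \<forall>z\<in>feas A b' \<inter> ball x \<rho>. distN N z (feas A b) \<le> \<kappa> * supnorm (b' - b)"
  proof (intro ballI)
    fix b' z assume z: "z \<in> feas A b' \<inter> ball x \<rho>"
    have zf: "A$t \<bullet> z \<le> b'$t" for t using z by (simp add: feas_iff)
    define s where "s = supnorm (b' - b)"
    define d where "d = x - y"
    have "eventually (\<lambda>la. \<forall>t. (A$t \<bullet> y = b$t \<and> A$t \<bullet> x \<noteq> b$t) \<longrightarrow>
             A$t \<bullet> (z - x) + la * (A$t \<bullet> d) \<le> b'$t - b$t) at_top"
    proof (rule eventually_all_finite)
      fix t
      show "eventually (\<lambda>la. (A$t \<bullet> y = b$t \<and> A$t \<bullet> x \<noteq> b$t) \<longrightarrow>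
             A$t \<bullet> (z - x) + la * (A$t \<bullet> d) \<le> b'$t - b$t) at_top"
      proof (cases "A$t \<bullet> y = b$t \<and> A$t \<bullet> x \<noteq> b$t")
        case True
        then have neg: "A$t \<bullet> d < 0" unfolding d_def using xf[of t] by (simp add: inner_diff_right)
        define L where "L = (A$t \<bullet> (z - x) - (b'$t - b$t)) / (- (A$t \<bullet> d))"
        show ?thesis unfolding eventually_at_top_linorder
        proof (intro exI[of _ L] allI impI)
          fix la assume "L \<le> la"
          then have "L * (- (A$t \<bullet> d)) \<le> la * (- (A$t \<bullet> d))" using neg by (simp add: mult_right_mono)
          then show "A$t \<bullet> (z - x) + la * (A$t \<bullet> d) \<le> b'$t - b$t" 
          proof -
            have "L * (- (A$t \<bullet> d)) = A$t \<bullet> (z - x) - (b'$t - b$t)" unfolding L_def using neg by simp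
            moreover have "la * (- (A$t \<bullet> d)) = - (la * (A$t \<bullet> d))" by simp
            ultimately show ?thesis using \<open>L * (- (A$t \<bullet> d)) \<le> la * (- (A$t \<bullet> d))\<close> by linarith
          qed
        qed
      qed auto
    qed
    then obtain la where lam: "\<And>t. A$t \<bullet> y = b$t \<Longrightarrow> A$t \<bullet> x \<noteq> b$t \<Longrightarrow>
             A$t \<bullet> (z - x) + la * (A$t \<bullet> d) \<le> b'$t - b$t"
      unfolding eventually_at_top_linorder by blast
    define q where "q = z - x + la *\<^sub>R d"
    have Fq: "A$t \<bullet> q \<le> b'$t - b$t" if "A$t \<bullet> y = b$t" for t
    proof (cases "A$t \<bullet> x = b$t")
      case True
      then show ?thesis using that zf[of t] by (simp add: q_def d_def inner_diff_right inner_add_right)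
    next
      case False
      then show ?thesis using lam[OF that False] by (simp add: q_def inner_diff_right inner_add_right)
    qed
    have e1: "eventually (\<lambda>\<mu>. b + \<mu> *\<^sub>R (b' - b) \<in> V) (at_right 0)"
    proof (rule topological_tendstoD[OF _ V])
      have "((\<lambda>\<mu>. b + \<mu> *\<^sub>R (b' - b)) \<longlongrightarrow> b + 0 *\<^sub>R (b' - b)) (at_right 0)"
        by (intro tendsto_intros)
      then show "((\<lambda>\<mu>. b + \<mu> *\<^sub>R (b' - b)) \<longlongrightarrow> b) (at_right 0)" by simp
    qed
    have e2: "eventually (\<lambda>\<mu>. y + \<mu> *\<^sub>R q \<in> U) (at_right 0)"
    proof (rule topological_tendstoD[OF _ U])
      have "((\<lambda>\<mu>. y + \<mu> *\<^sub>R q) \<longlongrightarrow> y + 0 *\<^sub>R q) (at_right 0)"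
        by (intro tendsto_intros)
      then show "((\<lambda>\<mu>. y + \<mu> *\<^sub>R q) \<longlongrightarrow> y) (at_right 0)" by simp
    qed
    have e4: "eventually (\<lambda>\<mu>. 0 < \<mu>) (at_right (0::real))"
      by (simp add: eventually_at_right_less)
    have e3: "eventually (\<lambda>\<mu>. \<forall>t. A$t \<bullet> (y + \<mu> *\<^sub>R q) \<le> (b + \<mu> *\<^sub>R (b' - b)) $ t) (at_right 0)"
    proof (rule eventually_all_finite)
      fix t
      show "eventually (\<lambda>\<mu>. A$t \<bullet> (y + \<mu> *\<^sub>R q) \<le> (b + \<mu> *\<^sub>R (b' - b)) $ t) (at_right 0)"
      proof (cases "A$t \<bullet> y = b$t")
        case True
        show ?thesis using e4
        proof (rule eventually_mono)
          fix \<mu> :: real assume "0 < \<mu>"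
          then have "\<mu> * (A$t \<bullet> q) \<le> \<mu> * (b'$t - b$t)" using Fq[OF True] by (simp add: mult_left_mono)
          then show "A$t \<bullet> (y + \<mu> *\<^sub>R q) \<le> (b + \<mu> *\<^sub>R (b' - b)) $ t"
            using True by (simp add: inner_add_right)
        qed
      next
        case False
        then have lt: "A$t \<bullet> y - b$t < 0" using yf[of t] by simp
        have "((\<lambda>\<mu>. (A$t \<bullet> y + \<mu> * (A$t \<bullet> q)) - (b$t + \<mu> * (b'$t - b$t)))
                \<longlongrightarrow> (A$t \<bullet> y + 0 * (A$t \<bullet> q)) - (b$t + 0 * (b'$t - b$t))) (at_right 0)"
          by (intro tendsto_intros)
        then have "eventually (\<lambda>\<mu>. (A$t \<bullet> y + \<mu> * (A$t \<bullet> q)) - (b$t + \<mu> * (b'$t - b$t)) < 0) (at_right 0)"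
          using lt order_tendstoD(2) by fastforce
        then show ?thesis
          by (rule eventually_mono) (simp add: inner_add_right)
      qed
    qed
    have "eventually (\<lambda>\<mu>. b + \<mu> *\<^sub>R (b' - b) \<in> V \<and> y + \<mu> *\<^sub>R q \<in> U \<and>
        (\<forall>t. A$t \<bullet> (y + \<mu> *\<^sub>R q) \<le> (b + \<mu> *\<^sub>R (b' - b)) $ t) \<and> 0 < \<mu>) (at_right (0::real))"
      using e1 e2 e3 e4 by (intro eventually_conj)
    then obtain \<mu> where mu1: "b + \<mu> *\<^sub>R (b' - b) \<in> V" and mu2: "y + \<mu> *\<^sub>R q \<in> U"
      and mu3: "\<forall>t. A$t \<bullet> (y + \<mu> *\<^sub>R q) \<le> (b + \<mu> *\<^sub>R (b' - b)) $ t" and mu4: "0 < \<mu>"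
      using eventually_happens'[OF trivial_limit_at_right_real] by blast
    define z' where "z' = y + \<mu> *\<^sub>R q"
    have "z' \<in> feas A (b + \<mu> *\<^sub>R (b' - b)) \<inter> U" using mu2 mu3 unfolding z'_def by (simp add: feas_iff)
    then have "distN N z' (feas A b) \<le> \<kappa> * supnorm (b + \<mu> *\<^sub>R (b' - b) - b)" using cal[OF mu1] by blast
    also have "\<dots> \<le> \<kappa> * (\<mu> * s)" unfolding s_def using supnorm_scale_le[of \<mu> "b' - b"] mu4 k0
      by (simp add: mult_left_mono)
    finally have dz': "distN N z' (feas A b) \<le> \<kappa> * (\<mu> * s)" .
    show "distN N z (feas A b) \<le> \<kappa> * supnorm (b' - b)"
      unfolding s_def[symmetric]
    proof (rule field_le_epsilon)
      fix \<eta> :: real assume \<eta>: "0 < \<eta>"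
      have "distN N z' (feas A b) < \<kappa> * (\<mu> * s) + \<mu> * \<eta>" using dz' mult_pos_pos[OF mu4 \<eta>] by linarith
      then obtain \<omega> where \<omega>: "\<omega> \<in> feas A b" and N\<omega>: "N (z' - \<omega>) < \<kappa> * (\<mu> * s) + \<mu> * \<eta>"
        using distN_lessD[of "feas A b"] y by blast
      define c where "c = (- la) *\<^sub>R d + (1 / \<mu>) *\<^sub>R (\<omega> - y)"
      have cC: "\<forall>t. A$t \<bullet> x = b$t \<longrightarrow> A$t \<bullet> c \<le> 0"
      proof (intro allI impI)
        fix t assume tx: "A$t \<bullet> x = b$t"
        have "A$t \<bullet> d = 0" using tx act[OF tx] by (simp add: d_def inner_diff_right)
        moreover have "A$t \<bullet> \<omega> \<le> A$t \<bullet> y" using \<omega> act[OF tx] by (simp add: feas_iff)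
        ultimately show "A$t \<bullet> c \<le> 0" using mu4
          by (simp add: c_def inner_add_right inner_diff_right divide_nonpos_pos)
      qed
      have "norm (z - x) < \<rho>" using z by (simp add: dist_norm norm_minus_commute)
      then have "distN N z (feas A b) \<le> N (z - x - c)" using loc cC by blast
      also have "z - x - c = (1 / \<mu>) *\<^sub>R (z' - \<omega>)"
        using mu4 by (simp add: z'_def q_def c_def algebra_simps)
      also have "N \<dots> = (1 / \<mu>) * N (z' - \<omega>)" using normN_basic(4)[OF N] mu4 by simp
      also have "\<dots> \<le> (1 / \<mu>) * (\<kappa> * (\<mu> * s) + \<mu> * \<eta>)" using N\<omega> mu4 by (simp add: divide_right_mono)
      also have "\<dots> = \<kappa> * s + \<eta>" using mu4 by (simp add: field_simps)
      finally show "distN N z (feas A b) \<le> \<kappa> * s + \<eta>" .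
    qed
  qed
  have "\<exists>V U. open V \<and> b \<in> V \<and> open U \<and> x \<in> U \<and>
        (\<forall>b'\<in>V. \<forall>z\<in>feas A b' \<inter> U. distN N z (feas A b) \<le> \<kappa> * supnorm (b' - b))"
    by (rule exI[of _ UNIV], rule exI[of _ "ball x \<rho>"]) (intro conjI open_UNIV UNIV_I open_ball centre_in_ball[THEN iffD2] \<rho> key)
  then show ?thesis unfolding calmset_def using k0 by (intro CollectI conjI)
qed

lemma clm_mono:
  fixes N :: "real^'n \<Rightarrow> real" and A :: "real^'n^'m"
  assumes N: "is_norm N" and x: "x \<in> feas A b" and y: "y \<in> feas A b"
    and act: "\<And>t. A$t \<bullet> x = b$t \<Longrightarrow> A$t \<bullet> y = b$t"
  shows "clm N A b x \<le> clm N A b y"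
  unfolding clm_eq
  by (rule Inf_superset_mono) (use calm_mono[OF N x y act] in blast)

lemma clm_finite:
  fixes N :: "real^'n \<Rightarrow> real" and A :: "real^'n^'m"
  assumes N: "is_norm N" and x: "x \<in> feas A b"
  shows "\<exists>\<gamma>\<ge>0. clm N A b x = ereal \<gamma>"
proof -
  obtain \<kappa> where k: "\<kappa> \<in> calmset N A b x" using calm_nonempty[OF N x] by blast
  have le: "clm N A b x \<le> ereal \<kappa>" unfolding clm_eq using k by (simp add: Inf_lower)
  have ge: "0 \<le> clm N A b x" unfolding clm_eq
    by (rule Inf_greatest) (auto simp: calmset_def)
  show ?thesis using le ge
    by (intro exI[of _ "real_of_ereal (clm N A b x)"]) (cases "clm N A b x", auto)
qed

lemma ri_active:
  fixes A :: "real^'n^'m"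
  assumes F: "F \<subseteq> feas A b" and x0: "x0 \<in> rel_interior F" and y: "y \<in> F"
    and t: "A$t \<bullet> x0 = b$t"
  shows "A$t \<bullet> y = b$t"
proof -
  obtain e where e: "e > 0" and sub: "ball x0 e \<inter> affine hull F \<subseteq> F"
    using x0 unfolding mem_rel_interior_ball by blast
  have x0F: "x0 \<in> F" using x0 rel_interior_subset by blast
  define n where "n = norm (x0 - y)"
  define \<epsilon> where "\<epsilon> = e / (2 * (n + 1))"
  have n0: "n \<ge> 0" unfolding n_def by simp
  have \<epsilon>0: "\<epsilon> > 0" unfolding \<epsilon>_def using e n0 by simp
  define w where "w = (1 + \<epsilon>) *\<^sub>R x0 + (- \<epsilon>) *\<^sub>R y"
  have "w \<in> affine hull F" unfolding w_def
    by (rule mem_affine[OF affine_affine_hull]) (use x0F y hull_subset[of F] in auto)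
  moreover have "dist x0 w < e"
  proof -
    have "x0 - w = \<epsilon> *\<^sub>R (y - x0)" by (simp add: w_def algebra_simps)
    then have "dist x0 w = \<epsilon> * n" using \<epsilon>0 by (simp add: dist_norm n_def norm_minus_commute)
    also have "\<dots> < e"
    proof -
      have "\<epsilon> * n = e * n / (2 * (n + 1))" unfolding \<epsilon>_def by simp
      also have "\<dots> < e"
      proof -
        have "e * n < e * (2 * (n + 1))" using e n0 by (intro mult_strict_left_mono) auto
        then show ?thesis using n0 by (simp add: pos_divide_less_eq)
      qed
      finally show ?thesis .
    qed
    finally show ?thesis .
  qed
  ultimately have "w \<in> F" using sub by auto
  then have "A$t \<bullet> w \<le> b$t" using F by (auto simp: feas_iff)
  then have "(1 + \<epsilon>) * b$t - \<epsilon> * (A$t \<bullet> y) \<le> b$t" using t by (simp add: w_def inner_diff_right inner_add_right)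
  then have "\<epsilon> * b$t \<le> \<epsilon> * (A$t \<bullet> y)" by (simp add: algebra_simps)
  then have "b$t \<le> A$t \<bullet> y" using \<epsilon>0 by simp
  moreover have "A$t \<bullet> y \<le> b$t" using F y by (auto simp: feas_iff)
  ultimately show ?thesis by simp
qed

theorem lemma2:
  fixes N :: "real ^ 'n \<Rightarrow> real" and A :: "real ^ 'n ^ 'm" and b :: "real ^ 'm"
    and F :: "(real ^ 'n) set"
  assumes "is_norm N"
    and "feas A b \<noteq> {}"
    and "F face_of feas A b"
  shows "\<exists>\<gamma>::real. \<gamma> \<ge> 0 \<and> (\<forall>x\<in>rel_interior F. clm N A b x = ereal \<gamma>)
           \<and> (\<forall>x\<in>F - rel_interior F. clm N A b x \<ge> ereal \<gamma>)"
proof (cases "F = {}")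
  case True
  then show ?thesis by auto
next
  case False
  have Fsub: "F \<subseteq> feas A b" using assms(3) face_of_imp_subset by blast
  have cvx: "convex F" using assms(3) face_of_imp_convex by blast
  obtain x0 where x0: "x0 \<in> rel_interior F" using rel_interior_eq_empty[OF cvx] False by blast
  have x0F: "x0 \<in> F" using x0 rel_interior_subset by blast
  obtain \<gamma> where g0: "\<gamma> \<ge> 0" and g: "clm N A b x0 = ereal \<gamma>"
    using clm_finite[OF assms(1)] x0F Fsub by blast
  have le: "clm N A b x0 \<le> clm N A b x" if "x \<in> F" for x
    using clm_mono[OF assms(1)] ri_active[OF Fsub x0 that] x0F that Fsub by blast
  have ge: "clm N A b x \<le> clm N A b x0" if "x \<in> rel_interior F" for x
  proof -
    have "x \<in> F" using that rel_interior_subset by blast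
    then show ?thesis using clm_mono[OF assms(1)] ri_active[OF Fsub that x0F] x0F Fsub by blast
  qed
  show ?thesis
  proof (intro exI[of _ \<gamma>] conjI g0 ballI)
    fix x assume "x \<in> rel_interior F"
    then show "clm N A b x = ereal \<gamma>" using le ge g rel_interior_subset by (metis antisym subsetD)
  next
    fix x assume "x \<in> F - rel_interior F"
    then show "ereal \<gamma> \<le> clm N A b x" using le g by auto
  qed
qed

end
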